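(* Let $G$ be a group and $H\subseteq G$ a maximal subgroup which is non-abelian simple, of finite index $p=[G:H]$, and suppose $G$ contains an element of order $p$. If the inclusion $H\subseteq G$ is a localization, then $G$ is simple.
   Context: A group homomorphism $i\colon H\to G$ is a localization if for every homomorphism $\varphi\colon H\to G$ there exists a unique homomorphism $\psi\colon G\to G$ with $\psi\circ i=\varphi$; for $H\subseteq G$, "$H\subseteq G$ is a localization" means the inclusion map is. *)

theory Defs
  imports "HOL-Algebra.Algebra"
begin

text \<open>A group is simple if it is nontrivial and has no normal subgroups other than
  the trivial subgroup and itself. (No finiteness assumed, unlike the library
  locale simple_group, which requires order G > 1 and hence finiteness.)\<close>
definition is_simple_group :: "('a, 'b) monoid_scheme \<Rightarrow> bool" where
  "is_simple_group G \<longleftrightarrow> group G \<and> carrier G \<noteq> {\<one>\<^bsub>G\<^esub>} \<and>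
     (\<forall>N. N \<lhd> G \<longrightarrow> N = {\<one>\<^bsub>G\<^esub>} \<or> N = carrier G)"

definition maximal_subgroup :: "'a set \<Rightarrow> ('a, 'b) monoid_scheme \<Rightarrow> bool" where
  "maximal_subgroup H G \<longleftrightarrow> subgroup H G \<and> H \<noteq> carrier G \<and>
     (\<forall>K. subgroup K G \<longrightarrow> H \<subseteq> K \<longrightarrow> K = H \<or> K = carrier G)"

definition inclusion_is_localization :: "'a set \<Rightarrow> ('a, 'b) monoid_scheme \<Rightarrow> bool" where
  "inclusion_is_localization H G \<longleftrightarrow>
     (\<forall>\<phi> \<in> hom (G\<lparr>carrier := H\<rparr>) G.
        \<exists>\<psi> \<in> hom G G. (\<forall>h\<in>H. \<psi> h = \<phi> h) \<and>
          (\<forall>\<psi>' \<in> hom G G. (\<forall>h\<in>H. \<psi>' h = \<phi> h) \<longrightarrow> (\<forall>x\<in>carrier G. \<psi>' x = \<psi> x)))"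

end

theory Submission
  imports Defs
begin

lemma loc_unique:
  assumes "inclusion_is_localization H G" "\<phi> \<in> hom (G\<lparr>carrier := H\<rparr>) G"
    "\<psi>1 \<in> hom G G" "\<psi>2 \<in> hom G G" "\<forall>h\<in>H. \<psi>1 h = \<phi> h" "\<forall>h\<in>H. \<psi>2 h = \<phi> h"
    "x \<in> carrier G"
  shows "\<psi>1 x = \<psi>2 x"
proof -
  from assms(1,2) obtain \<psi> where "\<psi> \<in> hom G G"
    "\<forall>\<psi>' \<in> hom G G. (\<forall>h\<in>H. \<psi>' h = \<phi> h) \<longrightarrow> (\<forall>x\<in>carrier G. \<psi>' x = \<psi> x)"
    unfolding inclusion_is_localization_def by blast
  then show ?thesis using assms by metis
qed

lemma incl_hom:
  assumes "group G" "subgroup H G"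
  shows "(\<lambda>h. h) \<in> hom (G\<lparr>carrier := H\<rparr>) G"
  using assms by (auto simp: hom_def subgroup.subset intro: subgroup.mem_carrier)

lemma triv_hom:
  assumes "group G"
  shows "(\<lambda>h. \<one>\<^bsub>G\<^esub>) \<in> hom K G"
  using assms by (auto simp: hom_def group.is_monoid)

lemma caseB:
  fixes G (structure)
  assumes G: "group G" and N: "N \<lhd> G" and H: "subgroup H G"
    and NH: "N \<inter> H = {\<one>\<^bsub>G\<^esub>}" and NHG: "N <#>\<^bsub>G\<^esub> H = carrier G"
    and L: "inclusion_is_localization H G"
  shows "N \<subseteq> {\<one>\<^bsub>G\<^esub>}"
proof -
  interpret group G by fact
  interpret N: normal N G by fact
  have Nc: "N \<subseteq> carrier G" using N.subset .
  have Hc: "H \<subseteq> carrier G" using H subgroup.subset by blast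
  have uniq: "h = h'" if "n \<in> N" "h \<in> H" "n' \<in> N" "h' \<in> H" "n \<otimes> h = n' \<otimes> h'" for n h n' h'
  proof -
    have c: "n \<in> carrier G" "h \<in> carrier G" "n' \<in> carrier G" "h' \<in> carrier G" using that Nc Hc by auto
    have "inv n' \<otimes> n = h' \<otimes> inv h"
      using that(5) c by (metis inv_closed m_assoc m_closed r_inv r_one l_inv l_one)
    moreover have "inv n' \<otimes> n \<in> N" using that N.subgroup_axioms
      by (simp add: subgroup.m_inv_closed subgroup.m_closed)
    moreover have "h' \<otimes> inv h \<in> H" using that H
      by (simp add: subgroup.m_inv_closed subgroup.m_closed)
    ultimately have "h' \<otimes> inv h = \<one>" using NH by auto
    then show ?thesis using c by (metis inv_equality inv_inv inv_closed)
  qed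
  define \<psi> where "\<psi> x = (THE h. h \<in> H \<and> (\<exists>n\<in>N. x = n \<otimes> h))" for x
  have psi: "\<psi> (n \<otimes> h) = h" if "n \<in> N" "h \<in> H" for n h
    unfolding \<psi>_def
    by (rule the_equality) (use that uniq in blast)+
  have dec: "\<exists>n\<in>N. \<exists>h\<in>H. x = n \<otimes> h" if "x \<in> carrier G" for x
    using that NHG unfolding set_mult_def by blast
  have hom: "\<psi> \<in> hom G G"
  proof (rule homI)
    fix x assume "x \<in> carrier G"
    then obtain n h where "n\<in>N" "h\<in>H" "x = n \<otimes> h" using dec by blast
    then show "\<psi> x \<in> carrier G" using psi Hc by auto
  next
    fix x y assume xy: "x \<in> carrier G" "y \<in> carrier G"
    obtain n h where a1: "n\<in>N" "h\<in>H" "x = n \<otimes> h" using dec[OF xy(1)] by blast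
    obtain n' h' where a2: "n'\<in>N" "h'\<in>H" "y = n' \<otimes> h'" using dec[OF xy(2)] by blast
    note a = a1 a2
    have c: "n \<in> carrier G" "h \<in> carrier G" "n' \<in> carrier G" "h' \<in> carrier G" using a Nc Hc by auto
    have e0: "inv h \<otimes> (h \<otimes> h') = h'"
      using c by (simp flip: m_assoc)
    have "x \<otimes> y = n \<otimes> (h \<otimes> (n' \<otimes> (inv h \<otimes> (h \<otimes> h'))))"
      using a c e0 by (simp add: m_assoc)
    also have "\<dots> = (n \<otimes> (h \<otimes> n' \<otimes> inv h)) \<otimes> (h \<otimes> h')"
      using c by (simp add: m_assoc)
    finally have "x \<otimes> y = (n \<otimes> (h \<otimes> n' \<otimes> inv h)) \<otimes> (h \<otimes> h')" .
    moreover have "n \<otimes> (h \<otimes> n' \<otimes> inv h) \<in> N"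
      by (rule N.m_closed[OF a(1) N.inv_op_closed2[OF c(2) a(4)]])
    moreover have "h \<otimes> h' \<in> H" by (rule subgroup.m_closed[OF H a(2) a(5)])
    ultimately have "\<psi> (x \<otimes> y) = h \<otimes> h'" using psi by simp
    then show "\<psi> (x \<otimes> y) = \<psi> x \<otimes> \<psi> y" using a psi by simp
  qed
  have idh: "(\<lambda>x. x) \<in> hom G G" by (auto simp: hom_def)
  have onH: "\<forall>h\<in>H. \<psi> h = h"
    using psi[of \<one>] N.one_closed Hc by force
  show ?thesis
  proof
    fix n assume n: "n \<in> N"
    have "\<psi> n = n"
      using loc_unique[OF L incl_hom[OF G H] hom idh onH] n Nc by auto
    moreover have "\<psi> n = \<one>" using psi[of n \<one>] n H Nc by (auto simp: subgroup.one_closed)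
    ultimately show "n \<in> {\<one>}" by simp
  qed
qed




lemma caseA:
  fixes G (structure)
  assumes G: "group G" and Hn: "H \<lhd> G" and M: "maximal_subgroup H G"
    and fin: "finite (rcosets H)" and card: "card (rcosets H) = p"
    and g: "g \<in> carrier G" "group.ord G g = p"
    and L: "inclusion_is_localization H G"
  shows False
proof -
  interpret group G by fact
  interpret Hn: normal H G by fact
  define Q where "Q = G Mod H"
  interpret Q: group Q unfolding Q_def by (rule Hn.factorgroup_is_group)
  have cQ: "carrier Q = rcosets H" by (simp add: Q_def FactGroup_def)
  have oneQ: "\<one>\<^bsub>Q\<^esub> = H" by (simp add: Q_def FactGroup_def)
  have homQ: "(\<lambda>a. H #> a) \<in> hom G Q" unfolding Q_def by (rule Hn.r_coset_hom_Mod)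
  have Hsub: "subgroup H G" by (rule Hn.subgroup_axioms)
  have Hc: "H \<subseteq> carrier G" by (rule Hn.subset)
  have Mx: "\<And>K. subgroup K G \<Longrightarrow> H \<subseteq> K \<Longrightarrow> K = H \<or> K = carrier G" and HG: "H \<noteq> carrier G"
    using M unfolding maximal_subgroup_def by auto
  obtain x where x: "x \<in> carrier G" "x \<notin> H" using HG Hc by blast
  define a where "a = H #> x"
  have aQ: "a \<in> carrier Q" using cQ x Hc rcosetsI a_def by auto
  define A where "A = carrier (subgroup_generated Q {a})"
  have Asub: "subgroup A Q" unfolding A_def by (rule Q.subgroup_subgroup_generated)
  have AQ: "A = range (\<lambda>k::int. a [^]\<^bsub>Q\<^esub> k)"
    unfolding A_def by (rule Q.carrier_subgroup_generated_by_singleton[OF aQ])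
  have Asub': "subgroup A (G Mod H)" using Asub Q_def by simp
  have U: "subgroup {y\<in>carrier G. H #> y \<in> A} G"
    using Hn.factgroup_subgroup_union_subgroup[OF Asub'] Hn.factgroup_subgroup_union_char[OF Asub'] by simp
  have "H \<subseteq> {y\<in>carrier G. H #> y \<in> A}"
  proof
    fix h assume h: "h \<in> H"
    have "H #> h = H" using Hn.rcos_const[OF G h] .
    moreover have "H \<in> A" using oneQ subgroup.one_closed[OF Asub] by simp
    ultimately show "h \<in> {y\<in>carrier G. H #> y \<in> A}" using h Hc by auto
  qed
  moreover have "x \<in> {y\<in>carrier G. H #> y \<in> A}"
  proof -
    have "H #> x = a [^]\<^bsub>Q\<^esub> (1::int)" using aQ a_def by simp
    then show ?thesis using x AQ by auto
  qed
  ultimately have UG: "{y\<in>carrier G. H #> y \<in> A} = carrier G" using Mx[OF U] x by blast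
  have allpow: "\<exists>k::int. H #> y = a [^]\<^bsub>Q\<^esub> k" if "y \<in> carrier G" for y
    using UG that AQ by blast
  have AcQ: "A = carrier Q"
  proof
    show "A \<subseteq> carrier Q" using Asub subgroup.subset by blast
    show "carrier Q \<subseteq> A"
    proof
      fix c assume "c \<in> carrier Q"
      then obtain y where "y \<in> carrier G" "c = H #> y" using cQ unfolding RCOSETS_def by blast
      then show "c \<in> A" using UG by blast
    qed
  qed
  have genA: "generate Q {a} = A" using aQ unfolding A_def subgroup_generated_def by simp
  have ordQ: "Q.ord a = p"
    using Q.generate_pow_card[OF aQ] genA AcQ cQ card by simp
  have transfer: "g [^] k = g [^] l" if "a [^]\<^bsub>Q\<^esub> k = a [^]\<^bsub>Q\<^esub> l" for k l :: int
    using that Q.int_pow_eq[OF aQ, of k l] int_pow_eq[OF g(1), of k l] ordQ g(2) by simp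
  define kk where "kk y = (SOME k::int. H #> y = a [^]\<^bsub>Q\<^esub> k)" for y
  have kk: "H #> y = a [^]\<^bsub>Q\<^esub> (kk y)" if "y \<in> carrier G" for y
    unfolding kk_def by (rule someI_ex[OF allpow[OF that]])
  define \<psi> where "\<psi> y = g [^] (kk y)" for y
  have hom: "\<psi> \<in> hom G G"
  proof (rule homI)
    fix y assume "y \<in> carrier G" then show "\<psi> y \<in> carrier G" using g unfolding \<psi>_def by simp
  next
    fix y z assume yz: "y \<in> carrier G" "z \<in> carrier G"
    have "a [^]\<^bsub>Q\<^esub> (kk (y \<otimes> z)) = H #> (y \<otimes> z)" using kk yz by simp
    also have "\<dots> = (H #> y) \<otimes>\<^bsub>Q\<^esub> (H #> z)" using homQ yz by (simp add: hom_mult)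
    also have "\<dots> = a [^]\<^bsub>Q\<^esub> (kk y) \<otimes>\<^bsub>Q\<^esub> a [^]\<^bsub>Q\<^esub> (kk z)" using kk yz by simp
    also have "\<dots> = a [^]\<^bsub>Q\<^esub> (kk y + kk z)" using aQ by (simp add: Q.int_pow_mult)
    finally have "g [^] kk (y \<otimes> z) = g [^] (kk y + kk z)" by (rule transfer)
    then show "\<psi> (y \<otimes> z) = \<psi> y \<otimes> \<psi> z" unfolding \<psi>_def using g by (simp add: int_pow_mult)
  qed
  have onH: "\<forall>h\<in>H. \<psi> h = \<one>"
  proof
    fix h assume h: "h \<in> H"
    have "a [^]\<^bsub>Q\<^esub> (kk h) = H #> h" using kk h Hc by auto
    also have "\<dots> = a [^]\<^bsub>Q\<^esub> (0::int)" using Hn.rcos_const[OF G h] oneQ by simp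
    finally have "g [^] kk h = g [^] (0::int)" by (rule transfer)
    then show "\<psi> h = \<one>" unfolding \<psi>_def by simp
  qed
  have th: "(\<lambda>_. \<one>) \<in> hom G G" by (rule triv_hom[OF G])
  have tt: "\<forall>h\<in>H. (\<lambda>_. \<one>) h = (\<lambda>_. \<one>) h" by simp
  have "\<psi> x = (\<lambda>_. \<one>) x"
    by (rule loc_unique[OF L triv_hom[OF G] hom th onH tt x(1)])
  then have "\<psi> x = \<one>" by simp
  moreover have "\<psi> x = g"
  proof -
    have "a [^]\<^bsub>Q\<^esub> (kk x) = H #> x" by (rule kk[OF x(1), symmetric])
    also have "\<dots> = a" by (simp add: a_def)
    also have "\<dots> = a [^]\<^bsub>Q\<^esub> (1::int)" using aQ by simp
    finally have "a [^]\<^bsub>Q\<^esub> (kk x) = a [^]\<^bsub>Q\<^esub> (1::int)" .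
    then have "g [^] kk x = g [^] (1::int)" by (rule transfer)
    then show ?thesis unfolding \<psi>_def using g by simp
  qed
  ultimately have "g = \<one>" by simp
  then have p1: "p = 1" using g(2) by simp
  have "H \<in> rcosets H" using rcosetsI[OF Hc one_closed] Hc by simp
  moreover have "a \<in> rcosets H" using aQ cQ by simp
  moreover have "a \<noteq> H" using rcos_self[OF x(1) Hsub] x(2) a_def by auto
  ultimately have "card {H, a} \<le> card (rcosets H)" using fin by (intro card_mono) auto
  then show False using p1 card \<open>a \<noteq> H\<close> by simp
qed

theorem proposition4p1:
  fixes G :: "('a, 'b) monoid_scheme" and H :: "'a set" and p :: nat
  assumes "group G"
    and "maximal_subgroup H G"
    and "is_simple_group (G\<lparr>carrier := H\<rparr>)"
    and "\<not> comm_group (G\<lparr>carrier := H\<rparr>)"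
    and "finite (rcosets\<^bsub>G\<^esub> H)"
    and "card (rcosets\<^bsub>G\<^esub> H) = p"
    and "\<exists>g \<in> carrier G. group.ord G g = p"
    and "inclusion_is_localization H G"
  shows "is_simple_group G"
proof -
  interpret group G by fact
  have Hsub: "subgroup H G" and HG: "H \<noteq> carrier G"
    and Mx: "\<And>K. subgroup K G \<Longrightarrow> H \<subseteq> K \<Longrightarrow> K = H \<or> K = carrier G"
    using assms(2) unfolding maximal_subgroup_def by blast+
  have Hc: "H \<subseteq> carrier G" by (rule subgroup.subset[OF Hsub])
  have H1: "\<one>\<^bsub>G\<^esub> \<in> H" by (rule subgroup.one_closed[OF Hsub])
  have simp0: "\<forall>K. K \<lhd> G\<lparr>carrier := H\<rparr> \<longrightarrow> K = {\<one>\<^bsub>G\<lparr>carrier := H\<rparr>\<^esub>} \<or> K = carrier (G\<lparr>carrier := H\<rparr>)"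
    using assms(3) unfolding is_simple_group_def by blast
  have simpH: "K = {\<one>\<^bsub>G\<^esub>} \<or> K = H" if "K \<lhd> G\<lparr>carrier := H\<rparr>" for K
    using simp0 that by simp
  obtain g where g: "g \<in> carrier G" "group.ord G g = p" using assms(7) by blast
  have C: "carrier G \<noteq> {\<one>\<^bsub>G\<^esub>}"
  proof
    assume c1: "carrier G = {\<one>\<^bsub>G\<^esub>}"
    have "H = carrier G" unfolding c1 using Hc H1 c1 by (intro equalityI) simp_all
    then show False using HG by contradiction
  qed
  have D: "N = {\<one>\<^bsub>G\<^esub>} \<or> N = carrier G" if N: "N \<lhd> G" for N
  proof -
    have NH: "N \<inter> H = {\<one>\<^bsub>G\<^esub>} \<or> N \<inter> H = H" using simpH[OF normal_Int_subgroup[OF Hsub N]] .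
    have Ns: "subgroup N G" by (rule normal_imp_subgroup[OF N])
    have N1: "\<one>\<^bsub>G\<^esub> \<in> N" by (rule subgroup.one_closed[OF Ns])
    show ?thesis
    proof (cases "N \<inter> H = H")
      case True
      then have "H \<subseteq> N" by blast
      then have "N = H \<or> N = carrier G" using Mx[OF Ns] by blast
      moreover have "N \<noteq> H"
      proof
        assume "N = H"
        then have "H \<lhd> G" using N by simp
        then show False using caseA[OF assms(1) _ assms(2) assms(5) assms(6) g assms(8)] by blast
      qed
      ultimately show ?thesis by blast
    next
      case False
      then have NH1: "N \<inter> H = {\<one>\<^bsub>G\<^esub>}" using NH by blast
      have S: "subgroup (N <#>\<^bsub>G\<^esub> H) G" by (rule mult_norm_subgroup[OF N Hsub])
      have "H \<subseteq> N <#>\<^bsub>G\<^esub> H"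
      proof
        fix h assume h: "h \<in> H"
        then have hc: "h \<in> carrier G" using Hc by blast
        then have e: "h = \<one>\<^bsub>G\<^esub> \<otimes>\<^bsub>G\<^esub> h" by (rule l_one[symmetric])
        show "h \<in> N <#>\<^bsub>G\<^esub> H" unfolding set_mult_def
          using N1 h e by blast
      qed
      then have "N <#>\<^bsub>G\<^esub> H = H \<or> N <#>\<^bsub>G\<^esub> H = carrier G" using Mx[OF S] by blast
      then show ?thesis
      proof
        assume e: "N <#>\<^bsub>G\<^esub> H = H"
        have "N \<subseteq> H"
        proof
          fix n assume n: "n \<in> N"
          then have nc: "n \<in> carrier G" by (rule subgroup.mem_carrier[OF Ns])
          then have e2: "n = n \<otimes>\<^bsub>G\<^esub> \<one>\<^bsub>G\<^esub>" by (rule r_one[symmetric])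
          have "n \<in> N <#>\<^bsub>G\<^esub> H" unfolding set_mult_def using H1 n e2 by blast
          then show "n \<in> H" using e by simp
        qed
        then have "N = {\<one>\<^bsub>G\<^esub>}" using NH1 by blast
        then show ?thesis by blast
      next
        assume e: "N <#>\<^bsub>G\<^esub> H = carrier G"
        have "N \<subseteq> {\<one>\<^bsub>G\<^esub>}" by (rule caseB[OF assms(1) N Hsub NH1 e assms(8)])
        then have "N = {\<one>\<^bsub>G\<^esub>}" using N1 by blast
        then show ?thesis by blast
      qed
    qed
  qed
  show ?thesis unfolding is_simple_group_def using assms(1) C D by blast
qed

end
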